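(* Let $p,q\in\mathcal{P}_d(\mathbb{C})$, let $\alpha$ be a root of $p$ of multiplicity $m^p_\alpha$ and $\beta$ a root of $q$ of multiplicity $m^q_\beta$. If $m:=m^p_\alpha+m^q_\beta-d\ge 0$, then $\alpha+\beta$ is a root of $p\boxplus_d q$ of multiplicity exactly $m$ (in particular, if $m=0$ then $\alpha+\beta$ is not a root of $p\boxplus_d q$).
   Context: $\mathcal{P}_d(\mathbb{C})$ denotes the monic complex polynomials of degree $d$. For $p(x)=\prod_{i=1}^d(x-\lambda_i)$ write $p(x)=\sum_{k=0}^d(-1)^k\binom{d}{k}\tilde e_k(p)x^{d-k}$, where $\tilde e_k(p)=\binom{d}{k}^{-1}\sum_{i_1<\dots<i_k}\lambda_{i_1}\cdots\lambda_{i_k}$, $\tilde e_0=1$. The finite free additive convolution $p\boxplus_d q$ is the monic degree-$d$ polynomial with $\tilde e_k(p\boxplus_d q)=\sum_{i=0}^k\binom{k}{i}\tilde e_i(p)\tilde e_{k-i}(q)$ for $0\le k\le d$. *)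

theory Defs
  imports "HOL-Computational_Algebra.Polynomial"
begin

definition monic_deg :: "nat \<Rightarrow> complex poly \<Rightarrow> bool" where
  "monic_deg d p \<longleftrightarrow> degree p = d \<and> lead_coeff p = 1"

text \<open>Normalized coefficients: p(x) = sum_k (-1)^k (d choose k) etilde_k(p) x^(d-k).\<close>
definition etilde :: "nat \<Rightarrow> nat \<Rightarrow> complex poly \<Rightarrow> complex" where
  "etilde d k p = (-1) ^ k * coeff p (d - k) / of_nat (d choose k)"

definition ffconv :: "nat \<Rightarrow> complex poly \<Rightarrow> complex poly \<Rightarrow> complex poly" where
  "ffconv d p q = (\<Sum>k=0..d. monom ((-1) ^ k * of_nat (d choose k) *
      (\<Sum>i=0..k. of_nat (k choose i) * etilde d i p * etilde d (k - i) q)) (d - k))"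

end

theory Submission imports Defs begin

lemma coeff_ffconv: "coeff (ffconv d p q) n = (if n \<le> d then (-1)^(d-n) * of_nat (d choose (d-n)) *
   (\<Sum>i=0..d-n. of_nat ((d-n) choose i) * etilde d i p * etilde d (d-n-i) q) else 0)"
proof -
  have "coeff (ffconv d p q) n = (\<Sum>k=0..d. if d - k = n then (-1) ^ k * of_nat (d choose k) *
      (\<Sum>i=0..k. of_nat (k choose i) * etilde d i p * etilde d (k - i) q) else 0)"
    unfolding ffconv_def coeff_sum coeff_monom by (simp add: eq_commute)
  also have "\<dots> = (\<Sum>k=0..d. if k = d - n \<and> n \<le> d then (-1) ^ k * of_nat (d choose k) *
      (\<Sum>i=0..k. of_nat (k choose i) * etilde d i p * etilde d (k - i) q) else 0)"
    by (rule sum.cong) auto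
  finally show ?thesis by (cases "n \<le> d") (auto simp: sum.delta)
qed

lemma weight:
  fixes p q :: "complex poly"
  assumes "i \<le> k" "k \<le> d"
  shows "(-1)^k * of_nat (d choose k) * (of_nat (k choose i) * etilde d i p * etilde d (k-i) q)
     = fact (d-i) * fact (d-k+i) / (fact (d-k) * fact d) * coeff p (d-i) * coeff q (d-k+i)"
proof -
  have s: "(-1::complex)^k * ((-1)^i * (-1)^(k-i)) = 1"
    using assms by (simp add: power_add[symmetric] power_even_eq[symmetric] mult_2[symmetric])
  have e: "d - (k - i) = d - k + i" using assms by simp
  have b1: "(of_nat (d choose k)::complex) = fact d / (fact k * fact (d-k))" using assms by (simp add: binomial_fact)
  have b2: "(of_nat (k choose i)::complex) = fact k / (fact i * fact (k-i))" using assms by (simp add: binomial_fact)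
  have b3: "(of_nat (d choose i)::complex) = fact d / (fact i * fact (d-i))" using assms by (simp add: binomial_fact)
  have b4: "(of_nat (d choose (k-i))::complex) = fact d / (fact (k-i) * fact (d-k+i))" using assms e by (simp add: binomial_fact)
  show ?thesis unfolding etilde_def e b1 b2 b3 b4
    using s by (simp add: field_simps)
qed


definition Phi :: "nat \<Rightarrow> complex poly \<Rightarrow> complex poly \<Rightarrow> complex poly" where
  "Phi d p q = smult (1 / fact d) (\<Sum>i=0..d. smult (poly ((pderiv^^(d-i)) q) 0) ((pderiv^^i) p))"

lemma poch_suc: "pochhammer (of_nat (Suc n) :: complex) i = fact (n+i) / fact n"
proof -
  have "(fact (n+i)::complex) = pochhammer 1 (n+i)" by (simp add: pochhammer_fact)
  also have "\<dots> = pochhammer 1 n * pochhammer (1 + of_nat n) i"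
    by (rule pochhammer_product')
  also have "\<dots> = fact n * pochhammer (of_nat (Suc n)) i"
    by (simp add: pochhammer_fact)
  finally show ?thesis by (simp add: field_simps)
qed

lemma coeff_Phi: "coeff (Phi d p q) n = (1 / fact d) * (\<Sum>i=0..d. fact (d-i) * coeff q (d-i) * (fact (n+i) / fact n) * coeff p (n+i))"
  unfolding Phi_def coeff_smult coeff_sum poly_0_coeff_0 coeff_higher_pderiv poch_suc
  by (simp add: pochhammer_fact[symmetric] mult_ac)

lemma ffconv_Phi:
  assumes "degree p \<le> d" "degree q \<le> d"
  shows "ffconv d p q = Phi d p q"
proof (rule poly_eqI)
  fix n
  show "coeff (ffconv d p q) n = coeff (Phi d p q) n"
  proof (cases "n \<le> d")
    case False
    then have "coeff p (n+i) = 0" for i using assms by (intro coeff_eq_0) auto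
    then show ?thesis using False by (simp add: coeff_ffconv coeff_Phi)
  next
    case True
    define k where "k = d - n"
    have nk: "n = d - k" "k \<le> d" using True k_def by auto
    have "coeff (ffconv d p q) n = (\<Sum>i=0..k. fact (d-i) * fact (d-k+i) / (fact (d-k) * fact d) * coeff p (d-i) * coeff q (d-k+i))"
      unfolding coeff_ffconv using True nk(2) unfolding k_def[symmetric] sum_distrib_left
      by (simp only: if_True) (intro sum.cong refl, simp add: weight)
    also have "\<dots> = (\<Sum>i=0..k. fact (d-i) * fact (n+i) / (fact n * fact d) * coeff p (n+i) * coeff q (d-i))"
      by (subst sum.atLeastAtMost_rev) (use nk in \<open>auto intro!: sum.cong\<close>)
    also have "\<dots> = (1 / fact d) * (\<Sum>i=0..k. fact (d-i) * coeff q (d-i) * (fact (n+i) / fact n) * coeff p (n+i))"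
      unfolding sum_distrib_left
      by (intro sum.cong refl) (simp add: field_simps)
    also have "\<dots> = coeff (Phi d p q) n"
    proof -
      have "(\<Sum>i=0..d. fact (d-i) * coeff q (d-i) * (fact (n+i) / fact n) * coeff p (n+i))
          = (\<Sum>i=0..k. fact (d-i) * coeff q (d-i) * (fact (n+i) / fact n) * coeff p (n+i))"
      proof (rule sum.mono_neutral_right)
        show "\<forall>i\<in>{0..d} - {0..k}. fact (d-i) * coeff q (d-i) * (fact (n+i) / fact n) * coeff p (n+i) = 0"
        proof
          fix i assume "i \<in> {0..d} - {0..k}"
          then have "coeff p (n+i) = 0" using assms nk by (intro coeff_eq_0) auto
          then show "fact (d-i) * coeff q (d-i) * (fact (n+i) / fact n) * coeff p (n+i) = 0" by simp
        qed
      qed (use nk in auto)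
      then show ?thesis unfolding coeff_Phi by simp
    qed
    finally show ?thesis .
  qed
qed


lemma ffconv_sym: "ffconv d p q = ffconv d q p"
proof -
  have inner: "(\<Sum>i=0..k. of_nat (k choose i) * etilde d i p * etilde d (k-i) q)
     = (\<Sum>i=0..k. of_nat (k choose i) * etilde d i q * etilde d (k-i) p)" for k
    by (subst sum.atLeastAtMost_rev) (auto intro!: sum.cong simp: binomial_symmetric[symmetric] mult_ac)
  show ?thesis unfolding ffconv_def inner ..
qed

definition Tr :: "complex \<Rightarrow> complex poly \<Rightarrow> complex poly" where
  "Tr y f = pcompose f [:y, 1:]"

lemma higher_pderiv_Tr: "(pderiv^^j) (Tr y f) = Tr y ((pderiv^^j) f)"
  by (induction j) (simp_all add: Tr_def pderiv_pcompose pderiv_pCons)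

lemma degree_Tr: "degree (Tr y f) = degree f"
  by (simp add: Tr_def degree_pcompose)

lemma poly_Tr: "poly (Tr y f) x = poly f (y + x)"
  by (simp add: Tr_def poly_pcompose)

lemma Tr_comm: "Tr a (Tr b f) = Tr b (Tr a f)"
  by (rule poly_eq_poly_eq_iff[THEN iffD1]) (auto simp: poly_Tr ac_simps)

lemma Tr_Phi: "Phi d (Tr y p) q = Tr y (Phi d p q)"
  unfolding Phi_def Tr_def pcompose_smult pcompose_sum
  by (simp add: higher_pderiv_Tr[unfolded Tr_def])

lemma ffconv_Tr1:
  assumes "degree p \<le> d" "degree q \<le> d"
  shows "ffconv d (Tr y p) q = Tr y (ffconv d p q)"
  using assms by (simp add: ffconv_Phi degree_Tr Tr_Phi)

lemma ffconv_Tr2: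
  assumes "degree p \<le> d" "degree q \<le> d"
  shows "ffconv d p (Tr y q) = Tr y (ffconv d p q)"
  using ffconv_Tr1[OF assms(2,1)] by (simp add: ffconv_sym)

lemma key:
  assumes "degree p \<le> d" "degree q \<le> d"
  shows "poly ((pderiv^^j) (ffconv d p q)) (a + b) =
     (1 / fact d) * (\<Sum>i=0..d. poly ((pderiv^^(d-i)) q) b * poly ((pderiv^^(j+i)) p) a)"
proof -
  have fa: "(pderiv^^j) ((pderiv^^k) f) = (pderiv^^(j+k)) f" for k and f :: "complex poly"
    by (simp add: funpow_add)
  have "ffconv d (Tr a p) (Tr b q) = Tr a (Tr b (ffconv d p q))"
    using assms by (simp add: ffconv_Tr1 ffconv_Tr2 degree_Tr Tr_comm)
  then have "poly ((pderiv^^j) (ffconv d p q)) (a + b) = poly ((pderiv^^j) (ffconv d (Tr a p) (Tr b q))) 0"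
    by (simp add: higher_pderiv_Tr poly_Tr add.commute)
  also have "ffconv d (Tr a p) (Tr b q) = Phi d (Tr a p) (Tr b q)"
    using assms by (simp add: ffconv_Phi degree_Tr)
  also have "poly ((pderiv^^j) (Phi d (Tr a p) (Tr b q))) 0 =
     (1 / fact d) * (\<Sum>i=0..d. poly ((pderiv^^(d-i)) q) b * poly ((pderiv^^(j+i)) p) a)"
    unfolding Phi_def higher_pderiv_smult higher_pderiv_sum poly_smult poly_sum
    using fa by (simp add: higher_pderiv_Tr poly_Tr mult_ac)
  finally show ?thesis .
qed

lemma order_imp_derivs:
  fixes f :: "complex poly"
  assumes "f \<noteq> 0" "order c f = n"
  shows "(\<forall>j<n. poly ((pderiv^^j) f) c = 0) \<and> poly ((pderiv^^n) f) c \<noteq> 0"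
  using assms
proof (induction n arbitrary: f)
  case 0
  then show ?case using order_root[of f c] by simp
next
  case (Suc n)
  have r: "poly f c = 0" using Suc.prems order_root[of f c] by simp
  have "pderiv f \<noteq> 0"
  proof
    assume "pderiv f = 0"
    then have "degree f = 0" by (simp add: pderiv_eq_0_iff)
    then show False using order_degree[OF Suc.prems(1), of c] Suc.prems(2) by simp
  qed
  moreover have "order c (pderiv f) = n" using order_pderiv[OF Suc.prems(1) r] Suc.prems(2) by simp
  ultimately have IH: "(\<forall>j<n. poly ((pderiv^^j) (pderiv f)) c = 0) \<and> poly ((pderiv^^n) (pderiv f)) c \<noteq> 0"
    using Suc.IH by blast
  have "poly ((pderiv^^j) f) c = 0" if "j < Suc n" for j
  proof (cases j)
    case 0 then show ?thesis using r by simp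
  next
    case (Suc j') then show ?thesis using IH that by (simp add: funpow_Suc_right del: funpow.simps)
  qed
  moreover have "poly ((pderiv^^Suc n) f) c \<noteq> 0" using IH by (simp add: funpow_Suc_right del: funpow.simps)
  ultimately show ?case by blast
qed

lemma derivs_imp_order:
  fixes f :: "complex poly"
  assumes "\<forall>j<n. poly ((pderiv^^j) f) c = 0" "poly ((pderiv^^n) f) c \<noteq> 0"
  shows "order c f = n"
  using assms
proof (induction n arbitrary: f)
  case 0
  then show ?case using order_root by auto
next
  case (Suc n)
  have f0: "f \<noteq> 0" using Suc.prems(2) by (auto simp del: funpow.simps)
  have r: "poly f c = 0" using Suc.prems(1) by auto
  have eq: "(pderiv^^j) (pderiv f) = (pderiv^^(Suc j)) f" for j
    by (simp only: funpow_Suc_right o_apply)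
  have "order c (pderiv f) = n"
    using Suc.prems by (intro Suc.IH) (simp_all only: eq, auto)
  then show ?case using order_pderiv[OF f0 r] by simp
qed


theorem mainTheorem2:
  fixes d :: nat and p q :: "complex poly" and \<alpha> \<beta> :: complex
  assumes "monic_deg d p" and "monic_deg d q"
    and "poly p \<alpha> = 0" and "poly q \<beta> = 0"
    and "order \<alpha> p + order \<beta> q \<ge> d"
  shows "order (\<alpha> + \<beta>) (ffconv d p q) = order \<alpha> p + order \<beta> q - d
         \<and> (order \<alpha> p + order \<beta> q = d \<longrightarrow> poly (ffconv d p q) (\<alpha> + \<beta>) \<noteq> 0)"
proof -
  define a where "a = order \<alpha> p"
  define b where "b = order \<beta> q"
  define m where "m = a + b - d"
  have dp: "degree p \<le> d" and dq: "degree q \<le> d" using assms(1,2) by (auto simp: monic_deg_def)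
  have p0: "p \<noteq> 0" and q0: "q \<noteq> 0" using assms(1,2) by (auto simp: monic_deg_def)
  have bd: "b \<le> d" using order_degree[OF q0, of \<beta>] dq b_def by simp
  have abd: "a + b \<ge> d" using assms(5) a_def b_def by simp
  note P = order_imp_derivs[OF p0 a_def[symmetric]]
  note Q = order_imp_derivs[OF q0 b_def[symmetric]]
  let ?F = "ffconv d p q"
  let ?t = "\<lambda>j i. poly ((pderiv^^(d-i)) q) \<beta> * poly ((pderiv^^(j+i)) p) \<alpha>"
  have K: "poly ((pderiv^^j) ?F) (\<alpha> + \<beta>) = (1 / fact d) * (\<Sum>i=0..d. ?t j i)" for j
    by (rule key[OF dp dq])
  have Z: "?t j i = 0" if "j \<le> m" "i \<noteq> d - b \<or> j < m" "i \<le> d" for i j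
  proof (cases "d - i < b")
    case True
    then show ?thesis using Q by simp
  next
    case False
    then have "i \<le> d - b" using that(3) by simp
    with that abd bd have "j + i < a" unfolding m_def by auto
    then show ?thesis using P by simp
  qed
  have lo: "\<forall>j<m. poly ((pderiv^^j) ?F) (\<alpha> + \<beta>) = 0"
    unfolding K using Z by (auto intro!: sum.neutral)
  have "(\<Sum>i=0..d. ?t m i) = (\<Sum>i\<in>{d-b}. ?t m i)"
    by (rule sum.mono_neutral_right) (use Z in auto)
  also have "\<dots> = poly ((pderiv^^b) q) \<beta> * poly ((pderiv^^a) p) \<alpha>"
    using bd abd unfolding m_def by simp
  finally have "(\<Sum>i=0..d. ?t m i) \<noteq> 0" using P Q by simp
  then have hi: "poly ((pderiv^^m) ?F) (\<alpha> + \<beta>) \<noteq> 0" using K by simp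
  have "order (\<alpha> + \<beta>) ?F = m" by (rule derivs_imp_order[OF lo hi])
  moreover have "poly ?F (\<alpha> + \<beta>) \<noteq> 0" if "a + b = d"
    using hi that unfolding m_def by simp
  ultimately show ?thesis unfolding m_def a_def b_def by simp
qed

end
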